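(* Let $n\ge 7$ be any integer (not necessarily prime) with $n\equiv 1$ or $5\pmod 6$. Then: (R) there exists a one-factorization $\mathcal{R}$ of $K_{2n}$ on $\{0,\dots,2n-1\}$ such that, if $n\equiv5\pmod 6$, $\mathcal{R}=\{\mathcal{R}_{i,j}:1\le i\le\frac{2n-1}{3},1\le j\le3\}$ with $\mathcal{R}_{i,1}\cup\mathcal{R}_{i,2}\cup\mathcal{R}_{i,3}=\mathcal{A}_i\cup\mathcal{B}_i\cup\mathcal{C}_{i-1}$ for $1\le i\le\frac{n-1}{2}$ and $\mathcal{R}_{i,1}=\mathcal{C}_{3i-n-2}$, $\mathcal{R}_{i,2}=\mathcal{C}_{3i-n-1}$, $\mathcal{R}_{i,3}=\mathcal{C}_{3i-n}$ for $\frac{n+1}{2}\le i\le\frac{2n-1}{3}$; and, if $n\equiv1\pmod6$, $\mathcal{R}=\{\mathcal{R}_{i,j}:1\le i\le\frac{n-1}{2},1\le j\le3\}\cup\{\mathcal{C}_i:\frac{n-1}{2}\le i\le n-1\}$ with $\mathcal{R}_{i,1}\cup\mathcal{R}_{i,2}\cup\mathcal{R}_{i,3}=\mathcal{A}_i\cup\mathcal{B}_i\cup\mathcal{C}_{i-1}$ for $1\le i\le\frac{n-1}{2}$; (T) there exists a one-factorization $\mathcal{T}$ of $K_{2n}$ on $\{0,\dots,2n-1\}$ with exactly the same properties with $\mathcal{R}$ replaced by $\mathcal{T}$ and every $\mathcal{C}_k$ replaced by $\mathcal{D}_k$.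
   Context: For $1\le i\le \frac{n-1}{2}$: $\mathcal{A}_i=\{\{x,y\}: x,y\in\{0,\dots,n-1\},\ y-x\equiv i \pmod n\}$ and $\mathcal{B}_i=\{\{x,y\}: x,y\in\{n,\dots,2n-1\},\ y-x\equiv i\pmod n\}$. For $0\le i\le n-1$: $\mathcal{C}_i=\{\{x,y\}: 0\le x\le n-1,\ n\le y\le 2n-1,\ x+y\equiv i\pmod n\}$ and $\mathcal{D}_i=\{\{x,y\}: 0\le x\le n-1,\ n\le y\le 2n-1,\ y-x\equiv i\pmod n\}$. A one-factor of $K_{2n}$ is a perfect matching; a one-factorization is a partition of the edge set of $K_{2n}$ into $2n-1$ one-factors. *)

theory Defs
  imports Main "HOL-Number_Theory.Cong"
begin

definition edges_K :: "nat \<Rightarrow> nat set set" where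
  "edges_K m = {{x, y} | x y. x < m \<and> y < m \<and> x \<noteq> y}"

definition one_factor :: "nat \<Rightarrow> nat set set \<Rightarrow> bool" where
  "one_factor m M \<longleftrightarrow> M \<subseteq> edges_K m \<and> (\<forall>v<m. \<exists>!e. e \<in> M \<and> v \<in> e)"

definition one_factorization :: "nat \<Rightarrow> nat set set set \<Rightarrow> bool" where
  "one_factorization m F \<longleftrightarrow>
     (\<forall>M\<in>F. one_factor m M) \<and>
     (\<forall>M\<in>F. \<forall>M'\<in>F. M \<noteq> M' \<longrightarrow> M \<inter> M' = {}) \<and>
     \<Union>F = edges_K m \<and> finite F \<and> card F = m - 1"

definition A_fam :: "nat \<Rightarrow> nat \<Rightarrow> nat set set" where
  "A_fam n i = {{x, y} | x y. x < n \<and> y < n \<and> [int y - int x = int i] (mod int n)}"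

definition B_fam :: "nat \<Rightarrow> nat \<Rightarrow> nat set set" where
  "B_fam n i = {{x, y} | x y. n \<le> x \<and> x < 2*n \<and> n \<le> y \<and> y < 2*n \<and>
                            [int y - int x = int i] (mod int n)}"

definition C_fam :: "nat \<Rightarrow> nat \<Rightarrow> nat set set" where
  "C_fam n i = {{x, y} | x y. x < n \<and> n \<le> y \<and> y < 2*n \<and> [x + y = i] (mod n)}"

definition D_fam :: "nat \<Rightarrow> nat \<Rightarrow> nat set set" where
  "D_fam n i = {{x, y} | x y. x < n \<and> n \<le> y \<and> y < 2*n \<and>
                            [int y - int x = int i] (mod int n)}"

text \<open>The property required of R (with X = C_fam n) resp. of T (with X = D_fam n).
  R i j stands for the one-factor R_{i,j}.\<close>
definition lemma6_prop :: "nat \<Rightarrow> (nat \<Rightarrow> nat set set) \<Rightarrow> (nat \<Rightarrow> nat \<Rightarrow> nat set set) \<Rightarrow> bool" where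
  "lemma6_prop n X R \<longleftrightarrow>
    (n mod 6 = 5 \<longrightarrow>
       one_factorization (2*n)
         {R i j | i j. 1 \<le> i \<and> i \<le> (2*n - 1) div 3 \<and> 1 \<le> j \<and> j \<le> 3} \<and>
       (\<forall>i. 1 \<le> i \<and> i \<le> (n - 1) div 2 \<longrightarrow>
          R i 1 \<union> R i 2 \<union> R i 3 = A_fam n i \<union> B_fam n i \<union> X (i - 1)) \<and>
       (\<forall>i. (n + 1) div 2 \<le> i \<and> i \<le> (2*n - 1) div 3 \<longrightarrow>
          R i 1 = X (3*i - n - 2) \<and> R i 2 = X (3*i - n - 1) \<and> R i 3 = X (3*i - n))) \<and>
    (n mod 6 = 1 \<longrightarrow>
       one_factorization (2*n)
         ({R i j | i j. 1 \<le> i \<and> i \<le> (n - 1) div 2 \<and> 1 \<le> j \<and> j \<le> 3} \<union>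
          {X i | i. (n - 1) div 2 \<le> i \<and> i \<le> n - 1}) \<and>
       (\<forall>i. 1 \<le> i \<and> i \<le> (n - 1) div 2 \<longrightarrow>
          R i 1 \<union> R i 2 \<union> R i 3 = A_fam n i \<union> B_fam n i \<union> X (i - 1)))"

end

theory Submission
  imports Defs
begin


definition nx :: "nat \<Rightarrow> nat \<Rightarrow> nat \<Rightarrow> nat" where
  "nx n i a = (if a + i < n then a + i else a + i - n)"
definition pv :: "nat \<Rightarrow> nat \<Rightarrow> nat \<Rightarrow> nat" where
  "pv n i a = (if i \<le> a then a - i else a + n - i)"
definition fc :: "nat \<Rightarrow> nat \<Rightarrow> nat \<Rightarrow> nat" where
  "fc n i a = (if n \<le> a + i then 3 else (a div i) mod 2 + 1)"
definition rc :: "nat \<Rightarrow> nat \<Rightarrow> nat \<Rightarrow> nat" where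
  "rc n i a = 6 - fc n i a - fc n i (pv n i a)"

lemma int_mod_small: "0 \<le> (z::int) \<Longrightarrow> z < m \<Longrightarrow> z mod m = z" by simp

lemma cong_nx:
  assumes "x < n" "y < n" "i < n"
  shows "[int y - int x = int i] (mod int n) \<longleftrightarrow> y = nx n i x"
proof
  assume c: "[int y - int x = int i] (mod int n)"
  hence e: "(int y - int x) mod int n = int i" using assms by (simp add: cong_def mod_less)
  show "y = nx n i x"
  proof (cases "int y - int x \<ge> 0")
    case True
    hence "(int y - int x) mod int n = int y - int x" using assms by simp
    thus ?thesis using e assms by (auto simp: nx_def)
  next
    case False
    have "(int y - int x) mod int n = (int y - int x + int n) mod int n" by simp
    also have "\<dots> = int y - int x + int n" using False assms by (intro int_mod_small) auto
    finally show ?thesis using e assms False by (auto simp: nx_def)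
  qed
next
  assume "y = nx n i x"
  thus "[int y - int x = int i] (mod int n)" using assms
    by (auto simp: nx_def cong_def of_nat_diff)
qed

lemma cong_C:
  fixes x y' k n :: nat
  assumes "x < n" "y' < n" "k < n"
  shows "[x + y' = k] (mod n) \<longleftrightarrow> y' = (if x \<le> k then k - x else k + n - x)"
proof -
  have km: "k mod n = k" using assms by simp
  have "[x + y' = k] (mod n) \<longleftrightarrow> (x + y') mod n = k" unfolding cong_def km ..
  also have "(x + y') mod n = (if x + y' < n then x + y' else x + y' - n)"
    using assms by (auto simp: mod_if le_mod_geq)
  finally show ?thesis using assms by auto
qed


lemma nx_lt: "a < n \<Longrightarrow> i < n \<Longrightarrow> nx n i a < n" by (auto simp: nx_def)
lemma pv_lt: "a < n \<Longrightarrow> i < n \<Longrightarrow> pv n i a < n" by (auto simp: pv_def)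
lemma nx_pv: "a < n \<Longrightarrow> i < n \<Longrightarrow> nx n i (pv n i a) = a" by (auto simp: nx_def pv_def)
lemma pv_nx: "a < n \<Longrightarrow> i < n \<Longrightarrow> pv n i (nx n i a) = a" by (auto simp: nx_def pv_def)
lemma nx_eq_pv: "a < n \<Longrightarrow> b < n \<Longrightarrow> i < n \<Longrightarrow> nx n i b = a \<longleftrightarrow> b = pv n i a"
  by (auto simp: nx_def pv_def)
lemma nx_neq: "a < n \<Longrightarrow> 0 < i \<Longrightarrow> i < n \<Longrightarrow> nx n i a \<noteq> a" by (auto simp: nx_def)
lemma nx_nx_neq: "a < n \<Longrightarrow> 0 < i \<Longrightarrow> 2*i < n \<Longrightarrow> odd n \<Longrightarrow> nx n i (nx n i a) \<noteq> a"
  by (auto simp: nx_def)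

lemma fc_range: "fc n i a \<in> {1,2,3}"
  by (auto simp: fc_def)

lemma fc_nx:
  assumes "a < n" "0 < i" "2*i < n"
  shows "fc n i (nx n i a) \<noteq> fc n i a"
proof (cases "n \<le> a + i")
  case True
  then show ?thesis using assms by (auto simp: fc_def nx_def)
next
  case False
  show ?thesis
  proof (cases "n \<le> a + i + i")
    case True then show ?thesis using assms False by (auto simp: fc_def nx_def)
  next
    case Fb: False
    have "(a + i) div i = a div i + 1" using assms by (simp add: div_add_self2)
    moreover have "Suc m mod 2 \<noteq> m mod 2" for m :: nat by presburger
    ultimately show ?thesis using assms False Fb by (auto simp: fc_def nx_def)
  qed
qed

lemma fc_pv:
  assumes "a < n" "0 < i" "2*i < n"
  shows "fc n i (pv n i a) \<noteq> fc n i a"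
  using fc_nx[of "pv n i a" n i] assms by (simp add: pv_lt nx_pv)

lemma rc_props:
  assumes "a < n" "0 < i" "2*i < n"
  shows "rc n i a \<in> {1,2,3}" "rc n i a \<noteq> fc n i a" "rc n i a \<noteq> fc n i (pv n i a)"
  using fc_pv[OF assms] fc_range[of n i a] fc_range[of n i "pv n i a"]
  by (auto simp: rc_def)

lemma color_cases:
  assumes "a < n" "0 < i" "2*i < n" "c \<in> {1,2,3}"
  shows "(fc n i a = c \<and> fc n i (pv n i a) \<noteq> c \<and> rc n i a \<noteq> c) \<or>
         (fc n i a \<noteq> c \<and> fc n i (pv n i a) = c \<and> rc n i a \<noteq> c) \<or>
         (fc n i a \<noteq> c \<and> fc n i (pv n i a) \<noteq> c \<and> rc n i a = c)"
  using fc_pv[OF assms(1-3)] fc_range[of n i a] fc_range[of n i "pv n i a"] assms(4)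
  by (auto simp: rc_def)


lemma edge_in: "p < m \<Longrightarrow> q < m \<Longrightarrow> p \<noteq> q \<Longrightarrow> {p, q} \<in> edges_K m"
  unfolding edges_K_def by blast

lemma local_struct:
  assumes d: "E1 \<noteq> E2" "E1 \<noteq> E3" "E2 \<noteq> E3" "x1 \<noteq> x2" "x1 \<noteq> x3" "x2 \<noteq> x3"
    and r: "x1 \<in> {1,2,3::nat}" "x2 \<in> {1,2,3}" "x3 \<in> {1,2,3}"
    and ch: "\<And>c e. (e \<in> M c \<and> v \<in> e) \<longleftrightarrow> ((e = E1 \<and> x1 = c) \<or> (e = E2 \<and> x2 = c) \<or> (e = E3 \<and> x3 = c))"
  shows "c \<in> {1,2,3} \<Longrightarrow> \<exists>!e. e \<in> M c \<and> v \<in> e"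
    and "e \<in> M c \<Longrightarrow> e \<in> M c' \<Longrightarrow> v \<in> e \<Longrightarrow> c = c'"
proof -
  assume c: "c \<in> {1,2,3}"
  have "x1 = c \<or> x2 = c \<or> x3 = c" using d r c by auto
  then show "\<exists>!e. e \<in> M c \<and> v \<in> e"
    unfolding ch using d by metis
next
  assume "e \<in> M c" "e \<in> M c'" "v \<in> e"
  then show "c = c'" using ch[of e c] ch[of e c'] d by metis
qed

lemma ex6I:
  assumes "Fa \<noteq> Fb" "Fa \<noteq> Fc" "Fb \<noteq> Fc" "yb \<noteq> ya" "yc \<noteq> ya" "yc \<noteq> yb"
    "ya \<in> {1,2,3::nat}" "yb \<in> {1,2,3}" "yc \<in> {1,2,3}"
    "\<And>c e. (e \<in> M c \<and> v \<in> e) \<longleftrightarrow> ((e = Fa \<and> ya = c) \<or> (e = Fb \<and> yb = c) \<or> (e = Fc \<and> yc = c))"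
  shows "\<exists>E1 E2 E3 x1 x2 x3. E1 \<noteq> E2 \<and> E1 \<noteq> E3 \<and> E2 \<noteq> E3 \<and> x1 \<noteq> x2 \<and> x1 \<noteq> x3 \<and> x2 \<noteq> x3
    \<and> x1 \<in> {1,2,3::nat} \<and> x2 \<in> {1,2,3} \<and> x3 \<in> {1,2,3} \<and>
    (\<forall>c e. (e \<in> M c \<and> v \<in> e) \<longleftrightarrow> ((e = E1 \<and> x1 = c) \<or> (e = E2 \<and> x2 = c) \<or> (e = E3 \<and> x3 = c)))"
  using assms by metis

locale pr =
  fixes n :: nat and s :: "nat \<Rightarrow> nat \<Rightarrow> nat"
  assumes n_odd: "odd n" and n3: "3 \<le> n"
  and s_lt: "k < n \<Longrightarrow> a < n \<Longrightarrow> s k a < n"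
  and s_inj: "k < n \<Longrightarrow> a < n \<Longrightarrow> a' < n \<Longrightarrow> s k a = s k a' \<Longrightarrow> a = a'"
  and s_surj: "k < n \<Longrightarrow> b < n \<Longrightarrow> \<exists>a<n. s k a = b"
  and s_uniq: "a < n \<Longrightarrow> b < n \<Longrightarrow> \<exists>!k. k < n \<and> s k a = b"
  and s_B: "k < n \<Longrightarrow> 0 < i \<Longrightarrow> 2*i < n \<Longrightarrow>
     (\<forall>a<n. s k (nx n i a) = nx n i (s k a)) \<or> (\<forall>a<n. s k (nx n i a) = pv n i (s k a))"
begin

definition XX :: "nat \<Rightarrow> nat set set" where
  "XX k = {{a, n + s k a} | a. a < n}"
definition AA :: "nat \<Rightarrow> nat set set" where
  "AA i = {{a, nx n i a} | a. a < n}"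
definition BB :: "nat \<Rightarrow> nat set set" where
  "BB i = {{n + b, n + nx n i b} | b. b < n}"
definition MM :: "nat \<Rightarrow> nat \<Rightarrow> nat set set" where
  "MM i c = {{a, nx n i a} | a. a < n \<and> fc n i a = c} \<union>
            {{n + s (i-1) a, n + s (i-1) (nx n i a)} | a. a < n \<and> fc n i a = c} \<union>
            {{a, n + s (i-1) a} | a. a < n \<and> rc n i a = c}"

lemma BB_s:
  assumes "k < n" "0 < i" "2*i < n"
  shows "BB i = {{n + s k a, n + s k (nx n i a)} | a. a < n}"
  using s_B[OF assms]
proof
  assume H: "\<forall>a<n. s k (nx n i a) = nx n i (s k a)"
  show ?thesis
  proof (intro set_eqI iffI)
    fix e assume "e \<in> BB i"
    then obtain b where b: "b < n" "e = {n + b, n + nx n i b}" unfolding BB_def by blast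
    obtain a where a: "a < n" "s k a = b" using s_surj[OF assms(1) b(1)] by blast
    show "e \<in> {{n + s k a, n + s k (nx n i a)} | a. a < n}"
      using a b H by auto
  next
    fix e assume "e \<in> {{n + s k a, n + s k (nx n i a)} | a. a < n}"
    then obtain a where a: "a < n" "e = {n + s k a, n + s k (nx n i a)}" by blast
    show "e \<in> BB i" unfolding BB_def using a H s_lt[OF assms(1) a(1)] by auto
  qed
next
  assume H: "\<forall>a<n. s k (nx n i a) = pv n i (s k a)"
  have i: "i < n" using assms by simp
  show ?thesis
  proof (intro set_eqI iffI)
    fix e assume "e \<in> BB i"
    then obtain b where b: "b < n" "e = {n + b, n + nx n i b}" unfolding BB_def by blast
    have nb: "nx n i b < n" using b i by (simp add: nx_lt)
    obtain a where a: "a < n" "s k a = nx n i b" using s_surj[OF assms(1) nb] by blast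
    have "s k (nx n i a) = b" using H a b i by (simp add: pv_nx)
    then have "e = {n + s k a, n + s k (nx n i a)}" using a b by auto
    then show "e \<in> {{n + s k a, n + s k (nx n i a)} | a. a < n}" using a by blast
  next
    fix e assume "e \<in> {{n + s k a, n + s k (nx n i a)} | a. a < n}"
    then obtain a where a: "a < n" "e = {n + s k a, n + s k (nx n i a)}" by blast
    have sa: "s k a < n" using s_lt[OF assms(1) a(1)] .
    have "e = {n + pv n i (s k a), n + nx n i (pv n i (s k a))}"
      using a H sa i by (auto simp: nx_pv)
    then show "e \<in> BB i" unfolding BB_def using pv_lt[OF sa i] by blast
  qed
qed


lemma char_lo:
  assumes i: "0 < i" "2*i < n" and v: "v < n"
  shows "(e \<in> MM i c \<and> v \<in> e) \<longleftrightarrow>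
    ((e = {v, nx n i v} \<and> fc n i v = c) \<or> (e = {pv n i v, v} \<and> fc n i (pv n i v) = c) \<or>
     (e = {v, n + s (i-1) v} \<and> rc n i v = c))"
proof -
  have k: "i - 1 < n" "i < n" using i by auto
  show ?thesis
  proof
    assume H: "e \<in> MM i c \<and> v \<in> e"
    then consider (a) a where "a < n" "fc n i a = c" "e = {a, nx n i a}"
      | (b) a where "a < n" "fc n i a = c" "e = {n + s (i-1) a, n + s (i-1) (nx n i a)}"
      | (r) a where "a < n" "rc n i a = c" "e = {a, n + s (i-1) a}"
      unfolding MM_def by blast
    then show "((e = {v, nx n i v} \<and> fc n i v = c) \<or> (e = {pv n i v, v} \<and> fc n i (pv n i v) = c) \<or>
     (e = {v, n + s (i-1) v} \<and> rc n i v = c))"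
    proof cases
      case (a a)
      then have "v = a \<or> v = nx n i a" using H by auto
      then show ?thesis
      proof
        assume "v = a" then show ?thesis using a by auto
      next
        assume vv: "v = nx n i a"
        then have "a = pv n i v" using a k by (simp add: pv_nx)
        then show ?thesis using a vv by auto
      qed
    next
      case (b a)
      then show ?thesis using H v by auto
    next
      case (r a)
      then have "v = a" using H v by auto
      then show ?thesis using r by auto
    qed
  next
    assume "((e = {v, nx n i v} \<and> fc n i v = c) \<or> (e = {pv n i v, v} \<and> fc n i (pv n i v) = c) \<or>
     (e = {v, n + s (i-1) v} \<and> rc n i v = c))"
    moreover have "{pv n i v, v} \<in> MM i c" if "fc n i (pv n i v) = c"
    proof -
      have "{pv n i v, v} = {pv n i v, nx n i (pv n i v)}" using v k by (simp add: nx_pv)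
      moreover have "pv n i v < n" using v k by (simp add: pv_lt)
      ultimately show ?thesis unfolding MM_def using that by blast
    qed
    moreover have "{v, nx n i v} \<in> MM i c" if "fc n i v = c"
      unfolding MM_def using that v by blast
    moreover have "{v, n + s (i-1) v} \<in> MM i c" if "rc n i v = c"
      unfolding MM_def using that v by blast
    ultimately show "e \<in> MM i c \<and> v \<in> e" by auto
  qed
qed

lemma char_hi:
  assumes i: "0 < i" "2*i < n" and a: "a < n" and v: "v = n + s (i-1) a"
  shows "(e \<in> MM i c \<and> v \<in> e) \<longleftrightarrow>
    ((e = {v, n + s (i-1) (nx n i a)} \<and> fc n i a = c) \<or>
     (e = {n + s (i-1) (pv n i a), v} \<and> fc n i (pv n i a) = c) \<or>
     (e = {a, v} \<and> rc n i a = c))"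
proof -
  have k: "i - 1 < n" "i < n" using i by auto
  show ?thesis
  proof
    assume H: "e \<in> MM i c \<and> v \<in> e"
    then consider (a) a' where "a' < n" "fc n i a' = c" "e = {a', nx n i a'}"
      | (b) a' where "a' < n" "fc n i a' = c" "e = {n + s (i-1) a', n + s (i-1) (nx n i a')}"
      | (r) a' where "a' < n" "rc n i a' = c" "e = {a', n + s (i-1) a'}"
      unfolding MM_def by blast
    then show "((e = {v, n + s (i-1) (nx n i a)} \<and> fc n i a = c) \<or>
     (e = {n + s (i-1) (pv n i a), v} \<and> fc n i (pv n i a) = c) \<or>
     (e = {a, v} \<and> rc n i a = c))"
    proof cases
      case (a a')
      then show ?thesis using H v nx_lt[OF a(1) k(2)] by auto
    next
      case (b a')
      then have "s (i-1) a = s (i-1) a' \<or> s (i-1) a = s (i-1) (nx n i a')" using H v by auto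
      then show ?thesis
      proof
        assume "s (i-1) a = s (i-1) a'"
        then have "a = a'" using s_inj[OF k(1) a b(1)] by simp
        then show ?thesis using b v by auto
      next
        assume "s (i-1) a = s (i-1) (nx n i a')"
        then have "a = nx n i a'" using s_inj[OF k(1) a nx_lt[OF b(1) k(2)]] by simp
        then have "a' = pv n i a" using b(1) k by (simp add: pv_nx)
        then show ?thesis using b v \<open>a = nx n i a'\<close> by auto
      qed
    next
      case (r a')
      then have "v = n + s (i-1) a'" using H v by auto
      then have "a = a'" using s_inj[OF k(1) a r(1)] v by simp
      then show ?thesis using r v by auto
    qed
  next
    assume "((e = {v, n + s (i-1) (nx n i a)} \<and> fc n i a = c) \<or>
     (e = {n + s (i-1) (pv n i a), v} \<and> fc n i (pv n i a) = c) \<or>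
     (e = {a, v} \<and> rc n i a = c))"
    moreover have "{n + s (i-1) (pv n i a), v} \<in> MM i c" if "fc n i (pv n i a) = c"
    proof -
      have "v = n + s (i-1) (nx n i (pv n i a))" using v a k by (simp add: nx_pv)
      moreover have "pv n i a < n" using a k by (simp add: pv_lt)
      ultimately show ?thesis unfolding MM_def using that by blast
    qed
    moreover have "{v, n + s (i-1) (nx n i a)} \<in> MM i c" if "fc n i a = c"
      unfolding MM_def using that a v by blast
    moreover have "{a, v} \<in> MM i c" if "rc n i a = c"
      unfolding MM_def using that a v by blast
    ultimately show "e \<in> MM i c \<and> v \<in> e" using v by auto
  qed
qed


lemma nx_ne_pv: "v < n \<Longrightarrow> 0 < i \<Longrightarrow> 2*i < n \<Longrightarrow> nx n i v \<noteq> pv n i v"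
  using n_odd by (auto simp: nx_def pv_def)

lemma AA_sub: "0 < i \<Longrightarrow> i < n \<Longrightarrow> AA i \<subseteq> edges_K (2*n)"
proof
  fix e assume "0 < i" "i < n" "e \<in> AA i"
  then obtain a where a: "a < n" "e = {a, nx n i a}" unfolding AA_def by blast
  have "nx n i a < n" "nx n i a \<noteq> a" using a \<open>0 < i\<close> \<open>i < n\<close> nx_lt nx_neq by auto
  then show "e \<in> edges_K (2*n)" using a by (simp add: edge_in)
qed
lemma BB_sub: "0 < i \<Longrightarrow> i < n \<Longrightarrow> BB i \<subseteq> edges_K (2*n)"
proof
  fix e assume "0 < i" "i < n" "e \<in> BB i"
  then obtain a where a: "a < n" "e = {n + a, n + nx n i a}" unfolding BB_def by blast
  have "nx n i a < n" "nx n i a \<noteq> a" using a \<open>0 < i\<close> \<open>i < n\<close> nx_lt nx_neq by auto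
  then show "e \<in> edges_K (2*n)" using a by (simp add: edge_in)
qed
lemma XX_sub: "k < n \<Longrightarrow> XX k \<subseteq> edges_K (2*n)"
proof
  fix e assume "k < n" "e \<in> XX k"
  then obtain a where a: "a < n" "e = {a, n + s k a}" unfolding XX_def by blast
  have "s k a < n" using a \<open>k < n\<close> s_lt by auto
  then show "e \<in> edges_K (2*n)" using a by (simp add: edge_in)
qed

lemma MM_union:
  assumes "0 < i" "2*i < n"
  shows "MM i 1 \<union> MM i 2 \<union> MM i 3 = AA i \<union> BB i \<union> XX (i-1)"
proof -
  have k: "i - 1 < n" using assms by simp
  have B: "BB i = {{n + s (i-1) a, n + s (i-1) (nx n i a)} | a. a < n}" using BB_s[OF k assms] .
  have r: "a < n \<Longrightarrow> rc n i a \<in> {1,2,3}" for a using rc_props[of a n i] assms by auto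
  have U: "e \<in> MM i 1 \<union> MM i 2 \<union> MM i 3" if "e \<in> MM i c" "c \<in> {1,2,3}" for e c
    using that by auto
  show ?thesis
  proof
    show "MM i 1 \<union> MM i 2 \<union> MM i 3 \<subseteq> AA i \<union> BB i \<union> XX (i - 1)"
      unfolding MM_def AA_def B XX_def by blast
  next
    show "AA i \<union> BB i \<union> XX (i - 1) \<subseteq> MM i 1 \<union> MM i 2 \<union> MM i 3"
    proof
      fix e assume "e \<in> AA i \<union> BB i \<union> XX (i - 1)"
      then consider (a) a where "a < n" "e = {a, nx n i a}"
        | (b) a where "a < n" "e = {n + s (i-1) a, n + s (i-1) (nx n i a)}"
        | (x) a where "a < n" "e = {a, n + s (i-1) a}"
        unfolding AA_def B XX_def by blast
      then show "e \<in> MM i 1 \<union> MM i 2 \<union> MM i 3"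
      proof cases
        case (a a)
        then have "e \<in> MM i (fc n i a)" unfolding MM_def by blast
        then show ?thesis using U fc_range by blast
      next
        case (b a)
        then have "e \<in> MM i (fc n i a)" unfolding MM_def by blast
        then show ?thesis using U fc_range by blast
      next
        case (x a)
        then have "e \<in> MM i (rc n i a)" unfolding MM_def by blast
        then show ?thesis using U r x by blast
      qed
    qed
  qed
qed

lemma MM_sub:
  assumes "0 < i" "2*i < n"
  shows "MM i c \<subseteq> AA i \<union> BB i \<union> XX (i-1)"
proof -
  have k: "i - 1 < n" using assms by simp
  have B: "BB i = {{n + s (i-1) a, n + s (i-1) (nx n i a)} | a. a < n}" using BB_s[OF k assms] .
  show ?thesis
  proof
    fix e assume "e \<in> MM i c"
    then consider (a) a where "a < n" "e = {a, nx n i a}"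
        | (b) a where "a < n" "e = {n + s (i-1) a, n + s (i-1) (nx n i a)}"
        | (x) a where "a < n" "e = {a, n + s (i-1) a}"
      unfolding MM_def by blast
    then show "e \<in> AA i \<union> BB i \<union> XX (i-1)"
    proof cases
      case (a a) then show ?thesis unfolding AA_def by blast
    next
      case (b a) then show ?thesis unfolding B by blast
    next
      case (x a) then show ?thesis unfolding XX_def by blast
    qed
  qed
qed

lemma MM_edges:
  assumes "0 < i" "2*i < n"
  shows "MM i c \<subseteq> edges_K (2*n)"
proof -
  have "i - 1 < n" "i < n" using assms by auto
  then show ?thesis using MM_sub[OF assms] AA_sub[of i] BB_sub[of i] XX_sub[of "i-1"] assms by blast
qed

lemma local_MM:
  assumes i: "0 < i" "2*i < n" and v: "v < 2*n"
  shows "\<exists>E1 E2 E3 x1 x2 x3. E1 \<noteq> E2 \<and> E1 \<noteq> E3 \<and> E2 \<noteq> E3 \<and> x1 \<noteq> x2 \<and> x1 \<noteq> x3 \<and> x2 \<noteq> x3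
    \<and> x1 \<in> {1,2,3::nat} \<and> x2 \<in> {1,2,3} \<and> x3 \<in> {1,2,3} \<and>
    (\<forall>c e. (e \<in> MM i c \<and> v \<in> e) \<longleftrightarrow> ((e = E1 \<and> x1 = c) \<or> (e = E2 \<and> x2 = c) \<or> (e = E3 \<and> x3 = c)))"
proof (cases "v < n")
  case True
  have k: "i - 1 < n" "i < n" using i by auto
  have d1: "{v, nx n i v} \<noteq> {pv n i v, v}"
    using nx_ne_pv[OF True i] nx_neq[OF True i(1) k(2)] by auto
  have d2: "{v, nx n i v} \<noteq> {v, n + s (i-1) v}" "{pv n i v, v} \<noteq> {v, n + s (i-1) v}"
  proof -
    show "{v, nx n i v} \<noteq> {v, n + s (i-1) v}"
    proof
      assume "{v, nx n i v} = {v, n + s (i-1) v}"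
      then have "n + s (i-1) v \<in> {v, nx n i v}" by simp
      then show False using True nx_lt[OF True k(2)] by auto
    qed
    show "{pv n i v, v} \<noteq> {v, n + s (i-1) v}"
    proof
      assume "{pv n i v, v} = {v, n + s (i-1) v}"
      then have "n + s (i-1) v \<in> {pv n i v, v}" by simp
      then show False using True pv_lt[OF True k(2)] by auto
    qed
  qed
  show ?thesis
    by (rule ex6I[where Fa="{v, nx n i v}" and Fb="{pv n i v, v}" and Fc="{v, n + s (i-1) v}" and ya="fc n i v" and yb="fc n i (pv n i v)" and yc="rc n i v"])
      (fact d1 d2 fc_pv[OF True i] rc_props[OF True i] fc_range[of n i v] fc_range[of n i "pv n i v"] char_lo[OF i True])+
next
  case False
  have k: "i - 1 < n" "i < n" using i by auto
  have "v - n < n" using v by simp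
  then obtain a where a: "a < n" "s (i-1) a = v - n" using s_surj[OF k(1)] by blast
  have vv: "v = n + s (i-1) a" using a False by simp
  have na: "nx n i a < n" "pv n i a < n" using a k by (auto simp: nx_lt pv_lt)
  have "s (i-1) (nx n i a) \<noteq> s (i-1) (pv n i a)"
    using s_inj[OF k(1) na] nx_ne_pv[OF a(1) i] by auto
  moreover have "s (i-1) (nx n i a) \<noteq> s (i-1) a"
    using s_inj[OF k(1) na(1) a(1)] nx_neq[OF a(1) i(1) k(2)] by auto
  ultimately have d1: "{v, n + s (i-1) (nx n i a)} \<noteq> {n + s (i-1) (pv n i a), v}"
  proof (intro notI)
    assume a1: "s (i-1) (nx n i a) \<noteq> s (i-1) (pv n i a)" "s (i-1) (nx n i a) \<noteq> s (i-1) a"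
      and eq: "{v, n + s (i-1) (nx n i a)} = {n + s (i-1) (pv n i a), v}"
    have "n + s (i-1) (nx n i a) \<in> {n + s (i-1) (pv n i a), v}" by (metis eq insertI1 insert_commute)
    then show False using a1 vv by auto
  qed
  have "a \<notin> {v, n + s (i-1) (nx n i a)}" "a \<notin> {n + s (i-1) (pv n i a), v}" using a vv by auto
  then have d2: "{v, n + s (i-1) (nx n i a)} \<noteq> {a, v}" "{n + s (i-1) (pv n i a), v} \<noteq> {a, v}"
    by blast+
  show ?thesis
    by (rule ex6I[where Fa="{v, n + s (i-1) (nx n i a)}" and Fb="{n + s (i-1) (pv n i a), v}" and Fc="{a, v}" and ya="fc n i a" and yb="fc n i (pv n i a)" and yc="rc n i a"])
      (fact d1 d2 fc_pv[OF a(1) i] rc_props[OF a(1) i] fc_range[of n i a] fc_range[of n i "pv n i a"] char_hi[OF i a(1) vv])+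
qed

lemma MM_one_factor:
  assumes i: "0 < i" "2*i < n" and c: "c \<in> {1,2,3}"
  shows "one_factor (2*n) (MM i c)"
  unfolding one_factor_def
proof (intro conjI allI impI)
  show "MM i c \<subseteq> edges_K (2*n)" using MM_edges[OF i] .
  fix v assume v: "v < 2*n"
  obtain E1 E2 E3 x1 x2 x3 where H: "E1 \<noteq> E2" "E1 \<noteq> E3" "E2 \<noteq> E3" "x1 \<noteq> x2" "x1 \<noteq> x3" "x2 \<noteq> x3"
    "x1 \<in> {1,2,3::nat}" "x2 \<in> {1,2,3}" "x3 \<in> {1,2,3}"
    "\<And>c e. (e \<in> MM i c \<and> v \<in> e) \<longleftrightarrow> ((e = E1 \<and> x1 = c) \<or> (e = E2 \<and> x2 = c) \<or> (e = E3 \<and> x3 = c))"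
    using local_MM[OF i v] by metis
  show "\<exists>!e. e \<in> MM i c \<and> v \<in> e" using local_struct(1)[OF H c] .
qed

lemma edges_K_bound: "e \<in> edges_K m \<Longrightarrow> \<exists>v. v \<in> e \<and> v < m"
  unfolding edges_K_def by auto

lemma MM_disj_c:
  assumes i: "0 < i" "2*i < n" and e: "e \<in> MM i c" "e \<in> MM i c'"
  shows "c = c'"
proof -
  obtain v where v: "v \<in> e" "v < 2*n" using edges_K_bound MM_edges[OF i] e(1) by blast
  obtain E1 E2 E3 x1 x2 x3 where H: "E1 \<noteq> E2" "E1 \<noteq> E3" "E2 \<noteq> E3" "x1 \<noteq> x2" "x1 \<noteq> x3" "x2 \<noteq> x3"
    "x1 \<in> {1,2,3::nat}" "x2 \<in> {1,2,3}" "x3 \<in> {1,2,3}"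
    "\<And>c e. (e \<in> MM i c \<and> v \<in> e) \<longleftrightarrow> ((e = E1 \<and> x1 = c) \<or> (e = E2 \<and> x2 = c) \<or> (e = E3 \<and> x3 = c))"
    using local_MM[OF i v(2)] by metis
  show ?thesis using local_struct(2)[OF H e v(1)] .
qed

lemma XX_one_factor:
  assumes k: "k < n"
  shows "one_factor (2*n) (XX k)"
  unfolding one_factor_def
proof (intro conjI allI impI)
  show "XX k \<subseteq> edges_K (2*n)" using XX_sub[OF k] .
  fix v assume v: "v < 2*n"
  show "\<exists>!e. e \<in> XX k \<and> v \<in> e"
  proof (cases "v < n")
    case True
    show ?thesis
    proof (rule ex1I[of _ "{v, n + s k v}"])
      show "{v, n + s k v} \<in> XX k \<and> v \<in> {v, n + s k v}" unfolding XX_def using True by blast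
      fix e assume "e \<in> XX k \<and> v \<in> e"
      then obtain a where "a < n" "e = {a, n + s k a}" "v \<in> e" unfolding XX_def by blast
      then show "e = {v, n + s k v}" using True by auto
    qed
  next
    case False
    have "v - n < n" using v by simp
    then obtain a where a: "a < n" "s k a = v - n" using s_surj[OF k] by blast
    show ?thesis
    proof (rule ex1I[of _ "{a, v}"])
      have "v = n + s k a" using a False by simp
      then show "{a, v} \<in> XX k \<and> v \<in> {a, v}" unfolding XX_def using a(1) by blast
      fix e assume "e \<in> XX k \<and> v \<in> e"
      then obtain a' where a': "a' < n" "e = {a', n + s k a'}" "v \<in> e" unfolding XX_def by blast
      then have "s k a' = s k a" using False a by auto
      then have "a' = a" using s_inj[OF k a'(1) a(1)] by simp
      then show "e = {a, v}" using a' a False by auto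
    qed
  qed
qed


lemma pair_nx:
  assumes "x < n" "y < n" "x \<noteq> y"
  shows "\<exists>i a. 0 < i \<and> 2*i < n \<and> a < n \<and> {x, y} = {a, nx n i a}"
proof -
  obtain m where m: "n = 2*m+1" using n_odd oddE by blast
  have main: "\<exists>i a. 0 < i \<and> 2*i < n \<and> a < n \<and> {x, y} = {a, nx n i a}" if "x < y" "x < n" "y < n" for x y
  proof (cases "2*(y-x) < n")
    case True
    then show ?thesis using that
      by (intro exI[of _ "y-x"] exI[of _ x]) (auto simp: nx_def)
  next
    case False
    have "nx n (n - (y - x)) y = x" using that False by (auto simp: nx_def)
    moreover have "2*(n - (y-x)) < n" using False that m by presburger
    ultimately show ?thesis using that
      by (intro exI[of _ "n - (y-x)"] exI[of _ y]) auto
  qed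
  show ?thesis
  proof (cases "x < y")
    case True then show ?thesis using main assms by blast
  next
    case False
    then have "y < x" using assms by auto
    then show ?thesis using main[of y x] assms by (metis insert_commute)
  qed
qed

lemma nx_pair_eq:
  assumes "a < n" "a' < n" "0 < i" "0 < i'" "2*i < n" "2*i' < n" "{a, nx n i a} = {a', nx n i' a'}"
  shows "i = i'"
  using assms(7) unfolding doubleton_eq_iff using assms(1-6) by (auto simp: nx_def split: if_splits)

lemma AA_disj:
  assumes "0 < i" "0 < i'" "2*i < n" "2*i' < n" "i \<noteq> i'"
  shows "AA i \<inter> AA i' = {}"
proof (rule ccontr)
  assume "AA i \<inter> AA i' \<noteq> {}"
  then obtain a a' where "a < n" "a' < n" "{a, nx n i a} = {a', nx n i' a'}" unfolding AA_def by blast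
  then show False using nx_pair_eq assms by blast
qed

lemma BB_disj:
  assumes "0 < i" "0 < i'" "2*i < n" "2*i' < n" "i \<noteq> i'"
  shows "BB i \<inter> BB i' = {}"
proof (rule ccontr)
  assume "BB i \<inter> BB i' \<noteq> {}"
  then obtain a a' where a: "a < n" "a' < n" "{n + a, n + nx n i a} = {n + a', n + nx n i' a'}" unfolding BB_def by blast
  have "(+) n ` {a, nx n i a} = (+) n ` {a', nx n i' a'}" using a(3) by simp
  then have "{a, nx n i a} = {a', nx n i' a'}" by (rule inj_image_eq_iff[THEN iffD1, rotated]) (simp add: inj_def)
  then show False using nx_pair_eq assms a by blast
qed

lemma XX_disj:
  assumes "k < n" "k' < n" "k \<noteq> k'"
  shows "XX k \<inter> XX k' = {}"
proof (rule ccontr)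
  assume "XX k \<inter> XX k' \<noteq> {}"
  then obtain a a' where a: "a < n" "a' < n" "{a, n + s k a} = {a', n + s k' a'}" unfolding XX_def by blast
  then have "a = a'" "s k a = s k' a'" unfolding doubleton_eq_iff by auto
  then show False using s_uniq[OF a(1) s_lt[OF assms(1) a(1)]] assms by metis
qed

lemma AA_lo: "e \<in> AA i \<Longrightarrow> i < n \<Longrightarrow> x \<in> e \<Longrightarrow> x < n"
  unfolding AA_def using nx_lt by auto
lemma BB_hi: "e \<in> BB i \<Longrightarrow> x \<in> e \<Longrightarrow> n \<le> x"
  unfolding BB_def by auto
lemma XX_mix: "e \<in> XX k \<Longrightarrow> (\<exists>x\<in>e. x < n) \<and> (\<exists>x\<in>e. n \<le> x)"
  unfolding XX_def by auto


lemma AA_not_BB: "e \<in> AA i \<Longrightarrow> i < n \<Longrightarrow> e \<notin> BB j"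
proof
  assume "e \<in> AA i" "i < n" "e \<in> BB j"
  then obtain a where "a < n" "e = {a, nx n i a}" unfolding AA_def by blast
  then show False using BB_hi[OF \<open>e \<in> BB j\<close>, of a] by auto
qed
lemma AA_not_XX: "e \<in> AA i \<Longrightarrow> i < n \<Longrightarrow> e \<notin> XX k"
  using AA_lo XX_mix by (meson not_le)
lemma BB_not_XX: "e \<in> BB i \<Longrightarrow> e \<notin> XX k"
  using BB_hi XX_mix by (meson not_le)

lemma G_disj:
  assumes "0 < i" "0 < i'" "2*i < n" "2*i' < n" "i \<noteq> i'"
  shows "(AA i \<union> BB i \<union> XX (i-1)) \<inter> (AA i' \<union> BB i' \<union> XX (i'-1)) = {}"
proof -
  have in1: "i < n" "i' < n" "i - 1 < n" "i' - 1 < n" "i - 1 \<noteq> i' - 1" using assms by auto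
  show ?thesis
    using AA_disj[OF assms] BB_disj[OF assms] XX_disj[OF in1(3,4,5)]
      AA_not_BB[OF _ in1(1)] AA_not_BB[OF _ in1(2)] AA_not_XX[OF _ in1(1)] AA_not_XX[OF _ in1(2)]
      BB_not_XX by blast
qed

lemma one_factor_ne: "one_factor m M \<Longrightarrow> 0 < m \<Longrightarrow> M \<noteq> {}"
  unfolding one_factor_def by blast

lemma cover:
  assumes e: "e \<in> edges_K (2*n)"
  shows "(\<exists>i. 0 < i \<and> 2*i < n \<and> e \<in> AA i \<union> BB i) \<or> (\<exists>k<n. e \<in> XX k)"
proof -
  obtain x y where xy: "e = {x, y}" "x < 2*n" "y < 2*n" "x \<noteq> y" using e unfolding edges_K_def by blast
  have mixed: "\<exists>k<n. {x', y'} \<in> XX k" if H: "x' < n" "n \<le> y'" "y' < 2*n" for x' y'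
  proof -
    have "y' - n < n" using H by simp
    then obtain k where k: "k < n" "s k x' = y' - n" using s_uniq[OF H(1)] by blast
    then have "{x', y'} = {x', n + s k x'}" using H by simp
    then show ?thesis unfolding XX_def using k H(1) by blast
  qed
  consider "x < n" "y < n" | "n \<le> x" "n \<le> y" | "x < n" "n \<le> y" | "n \<le> x" "y < n" by linarith
  then show ?thesis
  proof cases
    case 1
    then obtain i a where "0 < i" "2*i < n" "a < n" "{x, y} = {a, nx n i a}" using pair_nx xy by blast
    then show ?thesis unfolding AA_def xy(1) by blast
  next
    case 2
    have "x - n < n" "y - n < n" "x - n \<noteq> y - n" using 2 xy by auto
    then obtain i a where ia: "0 < i" "2*i < n" "a < n" "{x - n, y - n} = {a, nx n i a}"
      using pair_nx[of "x - n" "y - n"] by blast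
    have "{x, y} = (+) n ` {x - n, y - n}" using 2 by auto
    also have "\<dots> = {n + a, n + nx n i a}" using ia(4) by simp
    finally show ?thesis unfolding BB_def xy(1) using ia by blast
  next
    case 3 then show ?thesis using mixed xy by blast
  next
    case 4 then show ?thesis using mixed[of y x] xy by (metis insert_commute)
  qed
qed


lemma factorization:
  "one_factorization (2*n)
     ({MM i c | i c. 1 \<le> i \<and> i \<le> (n - 1) div 2 \<and> 1 \<le> c \<and> c \<le> 3} \<union>
      {XX k | k. (n - 1) div 2 \<le> k \<and> k \<le> n - 1})"
proof -
  obtain m where m: "n = 2*m+1" using n_odd oddE by blast
  have hm: "(n - 1) div 2 = m" using m by simp
  define I1 where "I1 = {1..m} \<times> {1..(3::nat)}"
  define I2 where "I2 = {m..<n}"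
  define F1 where "F1 = (\<lambda>(i,c). MM i c) ` I1"
  define F2 where "F2 = XX ` I2"
  have Feq: "{MM i c | i c. 1 \<le> i \<and> i \<le> (n - 1) div 2 \<and> 1 \<le> c \<and> c \<le> 3} \<union>
      {XX k | k. (n - 1) div 2 \<le> k \<and> k \<le> n - 1} = F1 \<union> F2"
  proof -
    have "{MM i c | i c. 1 \<le> i \<and> i \<le> m \<and> 1 \<le> c \<and> c \<le> 3} = F1"
    proof (intro set_eqI iffI)
      fix M assume "M \<in> {MM i c | i c. 1 \<le> i \<and> i \<le> m \<and> 1 \<le> c \<and> c \<le> 3}"
      then obtain i c where ic: "M = MM i c" "1 \<le> i" "i \<le> m" "1 \<le> c" "c \<le> 3" by blast
      have "(i,c) \<in> I1" unfolding I1_def using ic by auto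
      then show "M \<in> F1" unfolding F1_def using ic(1) by (intro image_eqI[of _ _ "(i,c)"]) auto
    next
      fix M assume "M \<in> F1"
      then obtain i c where ic: "(i,c) \<in> I1" "M = MM i c" unfolding F1_def by auto
      then have "1 \<le> i \<and> i \<le> m \<and> 1 \<le> c \<and> c \<le> 3" unfolding I1_def by auto
      then show "M \<in> {MM i c | i c. 1 \<le> i \<and> i \<le> m \<and> 1 \<le> c \<and> c \<le> 3}" using ic(2) by blast
    qed
    moreover have "{XX k | k. m \<le> k \<and> k \<le> n - 1} = F2"
    proof (intro set_eqI iffI)
      fix M assume "M \<in> {XX k | k. m \<le> k \<and> k \<le> n - 1}"
      then obtain k where k: "M = XX k" "m \<le> k" "k \<le> n - 1" by blast
      have "k \<in> I2" unfolding I2_def using k m by auto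
      then show "M \<in> F2" unfolding F2_def using k(1) by blast
    next
      fix M assume "M \<in> F2"
      then obtain k where k: "k \<in> I2" "M = XX k" unfolding F2_def by auto
      then have "m \<le> k \<and> k \<le> n - 1" unfolding I2_def by auto
      then show "M \<in> {XX k | k. m \<le> k \<and> k \<le> n - 1}" using k(2) by blast
    qed
    ultimately show ?thesis unfolding hm by simp
  qed
  have I1D: "0 < i" "2*i < n" "c \<in> {1,2,3}" if "(i,c) \<in> I1" for i c
    using that m unfolding I1_def by auto
  have I2D: "k < n" "m \<le> k" if "k \<in> I2" for k using that unfolding I2_def by auto
  have of1: "one_factor (2*n) (MM i c)" if "(i,c) \<in> I1" for i c
    using MM_one_factor I1D[OF that] by blast
  have of2: "one_factor (2*n) (XX k)" if "k \<in> I2" for k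
    using XX_one_factor I2D[OF that] by blast
  have ne1: "MM i c \<noteq> {}" if "(i,c) \<in> I1" for i c using one_factor_ne[OF of1[OF that]] m by simp
  have ne2: "XX k \<noteq> {}" if "k \<in> I2" for k using one_factor_ne[OF of2[OF that]] m by simp
  have d11: "MM i c \<inter> MM i' c' = {}" if "(i,c) \<in> I1" "(i',c') \<in> I1" "(i,c) \<noteq> (i',c')" for i c i' c'
  proof (cases "i = i'")
    case True
    then have "c \<noteq> c'" using that by simp
    then show ?thesis using MM_disj_c[OF I1D(1,2)[OF that(1)]] True by blast
  next
    case False
    show ?thesis using G_disj[OF I1D(1)[OF that(1)] I1D(1)[OF that(2)] I1D(2)[OF that(1)] I1D(2)[OF that(2)] False]
      MM_sub[OF I1D(1,2)[OF that(1)], of c] MM_sub[OF I1D(1,2)[OF that(2)], of c'] by blast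
  qed
  have d12: "MM i c \<inter> XX k = {}" if "(i,c) \<in> I1" "k \<in> I2" for i c k
  proof -
    have "i < n" "i - 1 < n" "k < n" "i - 1 \<noteq> k" using I1D[OF that(1)] I2D[OF that(2)] that(1) m
      unfolding I1_def by auto
    then have "XX (i-1) \<inter> XX k = {}" using XX_disj by blast
    then show ?thesis using MM_sub[OF I1D(1,2)[OF that(1)], of c] AA_not_XX[OF _ \<open>i < n\<close>] BB_not_XX
      by blast
  qed
  have d22: "XX k \<inter> XX k' = {}" if "k \<in> I2" "k' \<in> I2" "k \<noteq> k'" for k k'
    using XX_disj I2D that by blast
  have fin: "finite F1" "finite F2" unfolding F1_def F2_def I1_def I2_def by auto
  have inj1: "inj_on (\<lambda>(i,c). MM i c) I1"
  proof (rule inj_onI, clarify)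
    fix i c i' c' assume H: "(i,c) \<in> I1" "(i',c') \<in> I1" "MM i c = MM i' c'"
    show "i = i' \<and> c = c'" using d11[OF H(1,2)] H(3) ne1[OF H(1)] by auto
  qed
  have inj2: "inj_on XX I2"
    by (rule inj_onI) (use d22 ne2 in blast)
  have d12': "F1 \<inter> F2 = {}"
  proof (rule ccontr)
    assume "F1 \<inter> F2 \<noteq> {}"
    then obtain i c k where H: "(i,c) \<in> I1" "k \<in> I2" "MM i c = XX k" unfolding F1_def F2_def by auto
    then show False using d12[OF H(1,2)] ne1[OF H(1)] by simp
  qed
  have memF: "(\<exists>i c. (i,c) \<in> I1 \<and> M = MM i c) \<or> (\<exists>k. k \<in> I2 \<and> M = XX k)" if "M \<in> F1 \<union> F2" for M
    using that unfolding F1_def F2_def by auto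
  have cF: "card (F1 \<union> F2) = 2*n - 1"
  proof -
    have "card (F1 \<union> F2) = card F1 + card F2" using card_Un_disjoint[OF fin d12'] .
    also have "card F1 = card I1" unfolding F1_def using card_image[OF inj1] .
    also have "card F2 = card I2" unfolding F2_def using card_image[OF inj2] .
    also have "card I1 = m * 3" unfolding I1_def by simp
    also have "card I2 = n - m" unfolding I2_def by simp
    finally show ?thesis using m by simp
  qed
  have ofall: "\<forall>M\<in>F1 \<union> F2. one_factor (2*n) M" unfolding F1_def F2_def using of1 of2 by auto
  have dis: "\<forall>M\<in>F1 \<union> F2. \<forall>M'\<in>F1 \<union> F2. M \<noteq> M' \<longrightarrow> M \<inter> M' = {}"
  proof (intro ballI impI)
    fix M M' assume M: "M \<in> F1 \<union> F2" and M': "M' \<in> F1 \<union> F2" and ne: "M \<noteq> M'"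
    from memF[OF M] show "M \<inter> M' = {}"
    proof (elim disjE exE conjE)
      fix i c assume a: "(i,c) \<in> I1" "M = MM i c"
      from memF[OF M'] show ?thesis
      proof (elim disjE exE conjE)
        fix i' c' assume b: "(i',c') \<in> I1" "M' = MM i' c'"
        then have "(i,c) \<noteq> (i',c')" using a ne by auto
        then show ?thesis using d11[OF a(1) b(1)] a b by simp
      next
        fix k assume b: "k \<in> I2" "M' = XX k"
        then show ?thesis using d12[OF a(1) b(1)] a by simp
      qed
    next
      fix k assume a: "k \<in> I2" "M = XX k"
      from memF[OF M'] show ?thesis
      proof (elim disjE exE conjE)
        fix i' c' assume b: "(i',c') \<in> I1" "M' = MM i' c'"
        then show ?thesis using d12[OF b(1) a(1)] a by blast
      next
        fix k' assume b: "k' \<in> I2" "M' = XX k'"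
        then have "k \<noteq> k'" using a ne by auto
        then show ?thesis using d22[OF a(1) b(1)] a b by simp
      qed
    qed
  qed
  have un: "\<Union>(F1 \<union> F2) = edges_K (2*n)"
  proof
    show "\<Union>(F1 \<union> F2) \<subseteq> edges_K (2*n)" using ofall unfolding one_factor_def by blast
  next
    show "edges_K (2*n) \<subseteq> \<Union>(F1 \<union> F2)"
    proof
      fix e assume e: "e \<in> edges_K (2*n)"
      have inG: "e \<in> \<Union>(F1 \<union> F2)" if "e \<in> AA i \<union> BB i \<union> XX (i-1)" "0 < i" "2*i < n" for i
      proof -
        have "e \<in> MM i 1 \<union> MM i 2 \<union> MM i 3" using MM_union[OF that(2,3)] that(1) by blast
        moreover have "(i,1) \<in> I1" "(i,2) \<in> I1" "(i,3) \<in> I1" using that m unfolding I1_def by auto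
        ultimately show ?thesis unfolding F1_def by blast
      qed
      from cover[OF e] show "e \<in> \<Union>(F1 \<union> F2)"
      proof
        assume "\<exists>i. 0 < i \<and> 2*i < n \<and> e \<in> AA i \<union> BB i" then show ?thesis using inG by blast
      next
        assume "\<exists>k<n. e \<in> XX k"
        then obtain k where k: "k < n" "e \<in> XX k" by blast
        show ?thesis
        proof (cases "m \<le> k")
          case True
          then have "k \<in> I2" using k unfolding I2_def by simp
          then show ?thesis using k unfolding F2_def by blast
        next
          case False
          then show ?thesis using inG[of "k+1"] k m by simp
        qed
      qed
    qed
  qed
  show ?thesis unfolding Feq one_factorization_def using ofall dis un fin cF by simp
qed

end



lemma A_fam_eq: "0 < i \<Longrightarrow> i < n \<Longrightarrow> A_fam n i = {{a, nx n i a} | a. a < n}"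
proof (intro set_eqI iffI)
  fix e assume "i < n" "e \<in> A_fam n i"
  then obtain x y where H: "e = {x,y}" "x < n" "y < n" "[int y - int x = int i] (mod int n)"
    unfolding A_fam_def by blast
  then have "y = nx n i x" using cong_nx \<open>i < n\<close> by blast
  then show "e \<in> {{a, nx n i a} | a. a < n}" using H by blast
next
  fix e assume i: "0 < i" "i < n" "e \<in> {{a, nx n i a} | a. a < n}"
  then obtain a where a: "a < n" "e = {a, nx n i a}" by blast
  have "[int (nx n i a) - int a = int i] (mod int n)" using cong_nx[of a n "nx n i a" i] a i nx_lt by blast
  then show "e \<in> A_fam n i" unfolding A_fam_def using a nx_lt[of a n i] i by blast
qed

lemma cong_shift: "n \<le> y \<Longrightarrow> [int y - int x = int i] (mod int n) \<longleftrightarrow> [int (y - n) - int x = int i] (mod int n)"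
proof -
  assume "n \<le> y"
  then have eq: "int y - int x = (int (y - n) - int x) + int n" by simp
  show ?thesis unfolding cong_def eq mod_add_self2 ..
qed

lemma B_fam_eq: "0 < i \<Longrightarrow> i < n \<Longrightarrow> B_fam n i = {{n + b, n + nx n i b} | b. b < n}"
proof (intro set_eqI iffI)
  fix e assume "i < n" "e \<in> B_fam n i"
  then obtain x y where H: "e = {x,y}" "n \<le> x" "x < 2*n" "n \<le> y" "y < 2*n" "[int y - int x = int i] (mod int n)"
    unfolding B_fam_def by blast
  have "int y - int x = int (y - n) - int (x - n)" using H by simp
  then have "[int (y - n) - int (x - n) = int i] (mod int n)" using H(6) by simp
  moreover have "x - n < n" "y - n < n" using H by auto
  ultimately have "y - n = nx n i (x - n)" using cong_nx[of "x - n" n "y - n" i] \<open>i < n\<close> by blast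
  then have "e = {n + (x - n), n + nx n i (x - n)}" using H by auto
  then show "e \<in> {{n + b, n + nx n i b} | b. b < n}" using H by (intro CollectI exI[of _ "x - n"] conjI) auto
next
  fix e assume i: "0 < i" "i < n" "e \<in> {{n + b, n + nx n i b} | b. b < n}"
  then obtain a where a: "a < n" "e = {n + a, n + nx n i a}" by blast
  have "[int (nx n i a) - int a = int i] (mod int n)" using cong_nx[of a n "nx n i a" i] a i nx_lt by blast
  moreover have "int (n + nx n i a) - int (n + a) = int (nx n i a) - int a" by simp
  ultimately have "[int (n + nx n i a) - int (n + a) = int i] (mod int n)" by simp
  then show "e \<in> B_fam n i" unfolding B_fam_def using a nx_lt[of a n i] i
    by (intro CollectI exI[of _ "n + a"] exI[of _ "n + nx n i a"]) auto
qed

definition sC :: "nat \<Rightarrow> nat \<Rightarrow> nat \<Rightarrow> nat" where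
  "sC n k a = (if a \<le> k then k - a else k + n - a)"

lemma C_fam_eq: "k < n \<Longrightarrow> C_fam n k = {{a, n + sC n k a} | a. a < n}"
proof (intro set_eqI iffI)
  fix e assume k: "k < n" "e \<in> C_fam n k"
  then obtain x y where H: "e = {x,y}" "x < n" "n \<le> y" "y < 2*n" "[x + y = k] (mod n)"
    unfolding C_fam_def by blast
  have "[x + (y - n) = k] (mod n)" 
  proof -
    have "x + y = (x + (y - n)) + n" using H(3) by simp
    then have "(x + y) mod n = (x + (y - n)) mod n" by (metis mod_add_self2)
    then show ?thesis using H(5) by (simp add: cong_def)
  qed
  then have "y - n = sC n k x" using cong_C[of x n "y - n" k] H k unfolding sC_def by auto
  then have "e = {x, n + sC n k x}" using H by auto
  then show "e \<in> {{a, n + sC n k a} | a. a < n}" using H by auto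
next
  fix e assume k: "k < n" "e \<in> {{a, n + sC n k a} | a. a < n}"
  then obtain a where a: "a < n" "e = {a, n + sC n k a}" by blast
  have lt: "sC n k a < n" using a k unfolding sC_def by auto
  have "[a + sC n k a = k] (mod n)" using cong_C[of a n "sC n k a" k] a k lt unfolding sC_def by auto
  then have "[a + (n + sC n k a) = k] (mod n)"
  proof -
    assume c: "[a + sC n k a = k] (mod n)"
    have eq: "a + (n + sC n k a) = (a + sC n k a) + n" by simp
    show ?thesis unfolding eq cong_def mod_add_self2 using c unfolding cong_def .
  qed
  then show "e \<in> C_fam n k" unfolding C_fam_def using a lt
    by (intro CollectI exI[of _ a] exI[of _ "n + sC n k a"]) auto
qed

lemma D_fam_eq: "k < n \<Longrightarrow> D_fam n k = {{a, n + nx n k a} | a. a < n}"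
proof (intro set_eqI iffI)
  fix e assume k: "k < n" "e \<in> D_fam n k"
  then obtain x y where H: "e = {x,y}" "x < n" "n \<le> y" "y < 2*n" "[int y - int x = int k] (mod int n)"
    unfolding D_fam_def by blast
  have "[int (y - n) - int x = int k] (mod int n)" using H cong_shift by blast
  then have "y - n = nx n k x" using cong_nx[of x n "y - n" k] H k by auto
  then have "e = {x, n + nx n k x}" using H by auto
  then show "e \<in> {{a, n + nx n k a} | a. a < n}" using H by auto
next
  fix e assume k: "k < n" "e \<in> {{a, n + nx n k a} | a. a < n}"
  then obtain a where a: "a < n" "e = {a, n + nx n k a}" by blast
  have lt: "nx n k a < n" using a k nx_lt by auto
  have "[int (nx n k a) - int a = int k] (mod int n)" using cong_nx[of a n "nx n k a" k] a k lt by auto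
  then have "[int (n + nx n k a) - int a = int k] (mod int n)" using cong_shift[of n "n + nx n k a" a k] by simp
  then show "e \<in> D_fam n k" unfolding D_fam_def using a lt
    by (intro CollectI exI[of _ a] exI[of _ "n + nx n k a"]) auto
qed

lemma pr_C: "odd n \<Longrightarrow> 3 \<le> n \<Longrightarrow> pr n (sC n)"
proof (unfold_locales)
  fix k a assume "k < n" "a < n" then show "sC n k a < n" by (auto simp: sC_def)
next
  fix k a a' assume "k < n" "a < n" "a' < n" "sC n k a = sC n k a'" then show "a = a'"
    by (auto simp: sC_def split: if_splits)
next
  fix k b assume "k < n" "b < n"
  then show "\<exists>a<n. sC n k a = b" by (intro exI[of _ "sC n k b"]) (auto simp: sC_def)
next
  fix a b assume "a < n" "b < n"
  then show "\<exists>!k. k < n \<and> sC n k a = b"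
    by (intro ex1I[of _ "nx n b a"]) (auto simp: sC_def nx_def split: if_splits)
next
  fix k i assume "k < n" "0 < i" "2*i < n"
  then show "(\<forall>a<n. sC n k (nx n i a) = nx n i (sC n k a)) \<or> (\<forall>a<n. sC n k (nx n i a) = pv n i (sC n k a))"
    by (intro disjI2 allI impI) (auto simp: sC_def nx_def pv_def split: if_splits)
qed

lemma pr_D: "odd n \<Longrightarrow> 3 \<le> n \<Longrightarrow> pr n (nx n)"
proof (unfold_locales)
  fix k a assume "k < n" "a < n" then show "nx n k a < n" by (auto simp: nx_def)
next
  fix k a a' assume "k < n" "a < n" "a' < n" "nx n k a = nx n k a'" then show "a = a'"
    by (auto simp: nx_def split: if_splits)
next
  fix k b assume "k < n" "b < n"
  then show "\<exists>a<n. nx n k a = b" by (intro exI[of _ "pv n k b"]) (auto simp: pv_def nx_def)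
next
  fix a b assume "a < n" "b < n"
  then show "\<exists>!k. k < n \<and> nx n k a = b"
    by (intro ex1I[of _ "pv n a b"]) (auto simp: pv_def nx_def split: if_splits)
next
  fix k i assume "k < n" "0 < i" "2*i < n"
  then show "(\<forall>a<n. nx n k (nx n i a) = nx n i (nx n k a)) \<or> (\<forall>a<n. nx n k (nx n i a) = pv n i (nx n k a))"
    by (intro disjI1 allI impI) (auto simp: nx_def split: if_splits)
qed


lemma generic:
  assumes P: "pr n s" and n7: "n \<ge> 7" and nm: "n mod 6 = 1 \<or> n mod 6 = 5"
    and X: "\<And>k. k < n \<Longrightarrow> X k = pr.XX n s k"
  shows "\<exists>R. lemma6_prop n X R"
proof -
  interpret pr n s by (rule P)
  obtain h where h: "n = 2*h + 1" using n_odd oddE by blast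
  have hd: "(n - 1) div 2 = h" using h by simp
  define R where "R = (\<lambda>i j. if i \<le> h then MM i j else X (3*i + j - n - 3))"
  have AB: "A_fam n i = AA i" "B_fam n i = BB i" if "0 < i" "2*i < n" for i
    using A_fam_eq[of i n] B_fam_eq[of i n] that unfolding AA_def BB_def by auto
  have U: "R i 1 \<union> R i 2 \<union> R i 3 = A_fam n i \<union> B_fam n i \<union> X (i - 1)" if "1 \<le> i" "i \<le> h" for i
  proof -
    have i: "0 < i" "2*i < n" "i - 1 < n" using that h by auto
    show ?thesis unfolding R_def using that MM_union[OF i(1,2)] AB[OF i(1,2)] X[OF i(3)] by simp
  qed
  have fac: "one_factorization (2*n)
     ({MM i c | i c. 1 \<le> i \<and> i \<le> h \<and> 1 \<le> c \<and> c \<le> 3} \<union>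
      {XX k | k. h \<le> k \<and> k \<le> n - 1})" using factorization unfolding hd .
  have Xset: "{X i | i. h \<le> i \<and> i \<le> n - 1} = {XX k | k. h \<le> k \<and> k \<le> n - 1}"
  proof -
    have XE: "X k = XX k" if "k \<le> n - 1" for k using X[of k] that h by simp
    show ?thesis
    proof (intro set_eqI iffI)
      fix M assume "M \<in> {X i | i. h \<le> i \<and> i \<le> n - 1}"
      then obtain k where k: "M = X k" "h \<le> k" "k \<le> n - 1" by blast
      then show "M \<in> {XX k | k. h \<le> k \<and> k \<le> n - 1}" using XE[OF k(3)] by blast
    next
      fix M assume "M \<in> {XX k | k. h \<le> k \<and> k \<le> n - 1}"
      then obtain k where k: "M = XX k" "h \<le> k" "k \<le> n - 1" by blast
      then show "M \<in> {X i | i. h \<le> i \<and> i \<le> n - 1}" using XE[OF k(3)] by blast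
    qed
  qed
  have Rset1: "{R i j | i j. 1 \<le> i \<and> i \<le> h \<and> 1 \<le> j \<and> j \<le> 3} = {MM i c | i c. 1 \<le> i \<and> i \<le> h \<and> 1 \<le> c \<and> c \<le> 3}"
  proof (intro set_eqI iffI)
    fix M assume "M \<in> {R i j | i j. 1 \<le> i \<and> i \<le> h \<and> 1 \<le> j \<and> j \<le> 3}"
    then obtain i j where k: "M = R i j" "1 \<le> i" "i \<le> h" "1 \<le> j" "j \<le> 3" by blast
    then have "M = MM i j" unfolding R_def by simp
    then show "M \<in> {MM i c | i c. 1 \<le> i \<and> i \<le> h \<and> 1 \<le> c \<and> c \<le> 3}" using k by blast
  next
    fix M assume "M \<in> {MM i c | i c. 1 \<le> i \<and> i \<le> h \<and> 1 \<le> c \<and> c \<le> 3}"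
    then obtain i j where k: "M = MM i j" "1 \<le> i" "i \<le> h" "1 \<le> j" "j \<le> 3" by blast
    then have "M = R i j" unfolding R_def by simp
    then show "M \<in> {R i j | i j. 1 \<le> i \<and> i \<le> h \<and> 1 \<le> j \<and> j \<le> 3}" using k by blast
  qed
  have case1: "n mod 6 = 1 \<longrightarrow>
       one_factorization (2*n)
         ({R i j | i j. 1 \<le> i \<and> i \<le> (n - 1) div 2 \<and> 1 \<le> j \<and> j \<le> 3} \<union>
          {X i | i. (n - 1) div 2 \<le> i \<and> i \<le> n - 1}) \<and>
       (\<forall>i. 1 \<le> i \<and> i \<le> (n - 1) div 2 \<longrightarrow>
          R i 1 \<union> R i 2 \<union> R i 3 = A_fam n i \<union> B_fam n i \<union> X (i - 1))"
  proof (intro impI conjI allI)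
    show "one_factorization (2*n)
         ({R i j | i j. 1 \<le> i \<and> i \<le> (n - 1) div 2 \<and> 1 \<le> j \<and> j \<le> 3} \<union>
          {X i | i. (n - 1) div 2 \<le> i \<and> i \<le> n - 1})" unfolding hd Rset1 Xset by (rule fac)
  next
    fix i assume "1 \<le> i \<and> i \<le> (n - 1) div 2"
    then show "R i 1 \<union> R i 2 \<union> R i 3 = A_fam n i \<union> B_fam n i \<union> X (i - 1)"
      unfolding hd using U by simp
  qed
  have case5: "n mod 6 = 5 \<longrightarrow>
       one_factorization (2*n)
         {R i j | i j. 1 \<le> i \<and> i \<le> (2*n - 1) div 3 \<and> 1 \<le> j \<and> j \<le> 3} \<and>
       (\<forall>i. 1 \<le> i \<and> i \<le> (n - 1) div 2 \<longrightarrow>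
          R i 1 \<union> R i 2 \<union> R i 3 = A_fam n i \<union> B_fam n i \<union> X (i - 1)) \<and>
       (\<forall>i. (n + 1) div 2 \<le> i \<and> i \<le> (2*n - 1) div 3 \<longrightarrow>
          R i 1 = X (3*i - n - 2) \<and> R i 2 = X (3*i - n - 1) \<and> R i 3 = X (3*i - n))"
  proof
    assume n5: "n mod 6 = 5"
    have "n = 6*(n div 6) + 5" using div_mult_mod_eq[of n 6] n5 by simp
    then obtain q where q: "n = 6*q + 5" by blast
    have hq: "h = 3*q + 2" using h q by simp
    have pq: "(2*n - 1) div 3 = 4*q + 3" using q by simp
    have h1: "(n + 1) div 2 = 3*q + 3" using q by simp
    have Rset5: "{R i j | i j. 1 \<le> i \<and> i \<le> (2*n - 1) div 3 \<and> 1 \<le> j \<and> j \<le> 3} =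
       {MM i c | i c. 1 \<le> i \<and> i \<le> h \<and> 1 \<le> c \<and> c \<le> 3} \<union> {XX k | k. h \<le> k \<and> k \<le> n - 1}"
    proof (intro set_eqI iffI)
      fix M assume "M \<in> {R i j | i j. 1 \<le> i \<and> i \<le> (2*n - 1) div 3 \<and> 1 \<le> j \<and> j \<le> 3}"
      then obtain i j where ij: "M = R i j" "1 \<le> i" "i \<le> 4*q+3" "1 \<le> j" "j \<le> 3" unfolding pq by blast
      show "M \<in> {MM i c | i c. 1 \<le> i \<and> i \<le> h \<and> 1 \<le> c \<and> c \<le> 3} \<union> {XX k | k. h \<le> k \<and> k \<le> n - 1}"
      proof (cases "i \<le> h")
        case True
        then have "M = MM i j" using ij(1) unfolding R_def by simp
        then show ?thesis using ij True by blast
      next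
        case False
        define k where "k = 3*i + j - n - 3"
        have ge: "3*i + j \<ge> n + 3" using False ij q hq by linarith
        have k: "h \<le> k" "k \<le> n - 1" "k < n" unfolding k_def using ge False ij q hq by arith+
        have "R i j = X k" using False unfolding R_def k_def by simp
        then have "M = XX k" using ij(1) X[OF k(3)] by simp
        then show ?thesis using k by blast
      qed
    next
      fix M assume "M \<in> {MM i c | i c. 1 \<le> i \<and> i \<le> h \<and> 1 \<le> c \<and> c \<le> 3} \<union> {XX k | k. h \<le> k \<and> k \<le> n - 1}"
      then consider (a) i c where "M = MM i c" "1 \<le> i" "i \<le> h" "1 \<le> c" "c \<le> 3"
        | (b) k where "M = XX k" "h \<le> k" "k \<le> n - 1" by blast
      then show "M \<in> {R i j | i j. 1 \<le> i \<and> i \<le> (2*n - 1) div 3 \<and> 1 \<le> j \<and> j \<le> 3}"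
      proof cases
        case (a i c)
        have "M = R i c" using a unfolding R_def by simp
        moreover have "i \<le> (2*n - 1) div 3" using pq hq a(3) by linarith
        ultimately show ?thesis using a by blast
      next
        case (b k)
        define i where "i = (k + n + 2) div 3"
        define j where "j = (k + n + 2) mod 3 + 1"
        have dm: "3 * i + (k + n + 2) mod 3 = k + n + 2" unfolding i_def using div_mult_mod_eq[of "k + n + 2" 3] by simp
        have r3: "(k + n + 2) mod 3 < 3" by simp
        have jr: "j = (k + n + 2) mod 3 + 1" unfolding j_def ..
        have ij: "\<not> i \<le> h" "1 \<le> i" "i \<le> 4*q+3" "1 \<le> j" "j \<le> 3" "3*i + j - n - 3 = k"
          using dm r3 jr b(2,3) q hq by linarith+
        have "k < n" using b q by simp
        then have "R i j = XX k" unfolding R_def using ij(1,6) X by simp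
        then have "M = R i j" using b(1) by simp
        moreover have "i \<le> (2*n - 1) div 3" using ij(3) pq by simp
        ultimately show ?thesis using ij(2,4,5) by blast
      qed
    qed
    have tail: "R i 1 = X (3*i - n - 2) \<and> R i 2 = X (3*i - n - 1) \<and> R i 3 = X (3*i - n)"
      if "(n + 1) div 2 \<le> i" for i
    proof -
      have "\<not> i \<le> h" "3*i + 1 - n - 3 = 3*i - n - 2" "3*i + 2 - n - 3 = 3*i - n - 1" "3*i + 3 - n - 3 = 3*i - n"
        using that h1 hq q by auto
      then show ?thesis unfolding R_def by simp
    qed
    show "one_factorization (2*n)
         {R i j | i j. 1 \<le> i \<and> i \<le> (2*n - 1) div 3 \<and> 1 \<le> j \<and> j \<le> 3} \<and>
       (\<forall>i. 1 \<le> i \<and> i \<le> (n - 1) div 2 \<longrightarrow>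
          R i 1 \<union> R i 2 \<union> R i 3 = A_fam n i \<union> B_fam n i \<union> X (i - 1)) \<and>
       (\<forall>i. (n + 1) div 2 \<le> i \<and> i \<le> (2*n - 1) div 3 \<longrightarrow>
          R i 1 = X (3*i - n - 2) \<and> R i 2 = X (3*i - n - 1) \<and> R i 3 = X (3*i - n))"
    proof (intro conjI allI impI)
      show "one_factorization (2*n) {R i j | i j. 1 \<le> i \<and> i \<le> (2*n - 1) div 3 \<and> 1 \<le> j \<and> j \<le> 3}"
        unfolding Rset5 by (rule fac)
    next
      fix i assume "1 \<le> i \<and> i \<le> (n - 1) div 2"
      then show "R i 1 \<union> R i 2 \<union> R i 3 = A_fam n i \<union> B_fam n i \<union> X (i - 1)" unfolding hd using U by simp
    next
      fix i assume "(n + 1) div 2 \<le> i \<and> i \<le> (2*n - 1) div 3"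
      then show "R i 1 = X (3*i - n - 2)" "R i 2 = X (3*i - n - 1)" "R i 3 = X (3*i - n)" using tail by simp_all
    qed
  qed
  have "lemma6_prop n X R" unfolding lemma6_prop_def by (intro conjI case1 case5)
  then show ?thesis by blast
qed

theorem lemma6:
  fixes n :: nat
  assumes "n \<ge> 7" and "n mod 6 = 1 \<or> n mod 6 = 5"
  shows "(\<exists>R. lemma6_prop n (C_fam n) R) \<and> (\<exists>T. lemma6_prop n (D_fam n) T)"
proof -
  have o: "odd n" using assms(2) by presburger
  have n3: "3 \<le> n" using assms by simp
  have "\<exists>R. lemma6_prop n (C_fam n) R"
    by (rule generic[OF pr_C[OF o n3] assms]) (simp add: C_fam_eq pr.XX_def[OF pr_C[OF o n3]])
  moreover have "\<exists>T. lemma6_prop n (D_fam n) T"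
    by (rule generic[OF pr_D[OF o n3] assms]) (simp add: D_fam_eq pr.XX_def[OF pr_D[OF o n3]])
  ultimately show ?thesis ..
qed


end
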